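(* Suppose $r\neq0$ and $r+s=0$. Then the Leonard pair $L,L^*+\frac{r-d}{2}$ on $\mathcal P_d(\mathbb R)$ is dual almost bipartite.
   Context: Fix an integer $d\ge0$ and $r,s\in(-1,\infty)$. Write $(x)_i=x(x+1)\cdots(x+i-1)$, $(x)_0=1$. For $0\le i\le d$ put $\theta_i=(d-i)(d-i+r+s+1)$ (distinct) and $\theta^*_i=i$. Put $b^*_i=\frac{(d-i)(i-d-s)(2d-2i+r+s+2)_i}{(2d-2i+r+s)_{i+1}}$ ($0\le i\le d-1$), $c^*_i=\frac{i(i-d-r-1)(d-i+r+s+1)_{d-i}}{(d-i+r+s+2)_{d-i+1}}$ ($1\le i\le d$), $b^*_d=c^*_0=0$, and $a^*_i=\theta^*_0-b^*_i-c^*_i$. Let $\mathcal P_d(\mathbb R)$ be the real polynomials of degree at most $d$, each determined by its values at $\theta_0,\dots,\theta_d$. Let $L,L^*$ be the linear maps on $\mathcal P_d(\mathbb R)$ with $(Lf)(\theta_i)=\theta_i f(\theta_i)$ and $(L^*f)(\theta_i)=b^*_i f(\theta_{i+1})+a^*_i f(\theta_i)+c^*_i f(\theta_{i-1})$ ($0\le i\le d$; terms with coefficient $b^*_d$ or $c^*_0$ omitted); a scalar stands for that scalar times the identity. A square matrix is irreducible tridiagonal if its nonzero entries lie on the diagonal, subdiagonal or superdiagonal and all subdiagonal and superdiagonal entries are nonzero. A Leonard pair on a nonzero finite-dimensional vector space $V$ is an ordered pair $A,A^*$ of linear maps on $V$ such that there is an ordered basis in which $A$ is diagonal and $A^*$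 is irreducible tridiagonal, and there is an ordered basis in which $A^*$ is diagonal and $A$ is irreducible tridiagonal. A Leonard pair $A,A^*$ on $V$ is almost bipartite if there is an ordered basis of $V$ in which $A^*$ is diagonal and $A$ is irreducible tridiagonal with all diagonal entries except the last one equal to zero; it is dual almost bipartite if $A^*,A$ is almost bipartite, i.e. there is an ordered basis in which $A$ is diagonal and $A^*$ is irreducible tridiagonal with all diagonal entries except the last one equal to zero. *)

theory Defs
  imports "HOL-Computational_Algebra.Polynomial"
begin

definition lin_space :: "real poly set \<Rightarrow> bool" where
  "lin_space V \<longleftrightarrow> 0 \<in> V \<and> (\<forall>x\<in>V. \<forall>y\<in>V. x + y \<in> V) \<and> (\<forall>c. \<forall>x\<in>V. smult c x \<in> V)"

definition lin_map_on :: "real poly set \<Rightarrow> (real poly \<Rightarrow> real poly) \<Rightarrow> bool" where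
  "lin_map_on V A \<longleftrightarrow> (\<forall>x\<in>V. A x \<in> V) \<and> (\<forall>x\<in>V. \<forall>y\<in>V. A (x + y) = A x + A y)
     \<and> (\<forall>c. \<forall>x\<in>V. A (smult c x) = smult c (A x))"

definition ordered_basis :: "real poly set \<Rightarrow> nat \<Rightarrow> (nat \<Rightarrow> real poly) \<Rightarrow> bool" where
  "ordered_basis V n b \<longleftrightarrow> (\<forall>i<n. b i \<in> V)
     \<and> (\<forall>c. (\<Sum>i<n. smult (c i) (b i)) = 0 \<longrightarrow> (\<forall>i<n. c i = 0))
     \<and> (\<forall>v\<in>V. \<exists>c. v = (\<Sum>i<n. smult (c i) (b i)))"

definition matrix_in_basis :: "nat \<Rightarrow> (nat \<Rightarrow> real poly) \<Rightarrow> (real poly \<Rightarrow> real poly) \<Rightarrow> (nat \<Rightarrow> nat \<Rightarrow> real) \<Rightarrow> bool" where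
  "matrix_in_basis n b A M \<longleftrightarrow> (\<forall>j<n. A (b j) = (\<Sum>i<n. smult (M i j) (b i)))"

definition is_diagonal :: "nat \<Rightarrow> (nat \<Rightarrow> nat \<Rightarrow> real) \<Rightarrow> bool" where
  "is_diagonal n M \<longleftrightarrow> (\<forall>i<n. \<forall>j<n. i \<noteq> j \<longrightarrow> M i j = 0)"

definition irred_tridiagonal :: "nat \<Rightarrow> (nat \<Rightarrow> nat \<Rightarrow> real) \<Rightarrow> bool" where
  "irred_tridiagonal n M \<longleftrightarrow> (\<forall>i<n. \<forall>j<n. (j + 1 < i \<or> i + 1 < j) \<longrightarrow> M i j = 0)
     \<and> (\<forall>i. i + 1 < n \<longrightarrow> M (i + 1) i \<noteq> 0 \<and> M i (i + 1) \<noteq> 0)"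

definition leonard_pair :: "real poly set \<Rightarrow> (real poly \<Rightarrow> real poly) \<Rightarrow> (real poly \<Rightarrow> real poly) \<Rightarrow> bool" where
  "leonard_pair V A As \<longleftrightarrow> lin_space V \<and> V \<noteq> {0} \<and> lin_map_on V A \<and> lin_map_on V As
     \<and> (\<exists>n b M Ms. ordered_basis V n b \<and> matrix_in_basis n b A M \<and> matrix_in_basis n b As Ms
          \<and> is_diagonal n M \<and> irred_tridiagonal n Ms)
     \<and> (\<exists>n b M Ms. ordered_basis V n b \<and> matrix_in_basis n b A M \<and> matrix_in_basis n b As Ms
          \<and> is_diagonal n Ms \<and> irred_tridiagonal n M)"

definition almost_bipartite :: "real poly set \<Rightarrow> (real poly \<Rightarrow> real poly) \<Rightarrow> (real poly \<Rightarrow> real poly) \<Rightarrow> bool" where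
  "almost_bipartite V A As \<longleftrightarrow> leonard_pair V A As
     \<and> (\<exists>n b M Ms. ordered_basis V n b \<and> matrix_in_basis n b A M \<and> matrix_in_basis n b As Ms
          \<and> is_diagonal n Ms \<and> irred_tridiagonal n M \<and> (\<forall>i. i + 1 < n \<longrightarrow> M i i = 0))"

definition dual_almost_bipartite :: "real poly set \<Rightarrow> (real poly \<Rightarrow> real poly) \<Rightarrow> (real poly \<Rightarrow> real poly) \<Rightarrow> bool" where
  "dual_almost_bipartite V A As \<longleftrightarrow> almost_bipartite V As A"

definition Pd :: "nat \<Rightarrow> real poly set" where
  "Pd d = {p. degree p \<le> d}"

definition theta :: "nat \<Rightarrow> real \<Rightarrow> real \<Rightarrow> nat \<Rightarrow> real" where
  "theta d r s i = real (d - i) * (real (d - i) + r + s + 1)"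

definition thetas :: "nat \<Rightarrow> real" where
  "thetas i = real i"

definition bs :: "nat \<Rightarrow> real \<Rightarrow> real \<Rightarrow> nat \<Rightarrow> real" where
  "bs d r s i = (if i < d then
      real (d - i) * (real i - real d - s) * pochhammer (2 * real d - 2 * real i + r + s + 2) i
        / pochhammer (2 * real d - 2 * real i + r + s) (i + 1)
    else 0)"

definition cs :: "nat \<Rightarrow> real \<Rightarrow> real \<Rightarrow> nat \<Rightarrow> real" where
  "cs d r s i = (if 1 \<le> i \<and> i \<le> d then
      real i * (real i - real d - r - 1) * pochhammer (real d - real i + r + s + 1) (d - i)
        / pochhammer (real d - real i + r + s + 2) (d - i + 1)
    else 0)"

definition as :: "nat \<Rightarrow> real \<Rightarrow> real \<Rightarrow> nat \<Rightarrow> real" where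
  "as d r s i = thetas 0 - bs d r s i - cs d r s i"

definition opL :: "nat \<Rightarrow> real \<Rightarrow> real \<Rightarrow> real poly \<Rightarrow> real poly" where
  "opL d r s f = (THE g. degree g \<le> d \<and>
     (\<forall>i\<le>d. poly g (theta d r s i) = theta d r s i * poly f (theta d r s i)))"

definition opLs :: "nat \<Rightarrow> real \<Rightarrow> real \<Rightarrow> real poly \<Rightarrow> real poly" where
  "opLs d r s f = (THE g. degree g \<le> d \<and>
     (\<forall>i\<le>d. poly g (theta d r s i) =
        (if i < d then bs d r s i * poly f (theta d r s (i + 1)) else 0)
        + as d r s i * poly f (theta d r s i)
        + (if 0 < i then cs d r s i * poly f (theta d r s (i - 1)) else 0)))"

end

theory Submission
  imports Defs
begin
definition lam :: "real \<Rightarrow> real" where "lam y = y * (y + 1)"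

primrec tau :: "nat \<Rightarrow> real poly" where
  "tau 0 = 1"
| "tau (Suc m) = tau m * [:- lam (real m), 1:]"

lemma tau_deg: "degree (tau m) = m \<and> coeff (tau m) m = 1"
proof (induction m)
  case 0 then show ?case by simp
next
  case (Suc m)
  have ne: "tau m \<noteq> 0" using Suc by auto
  have "degree (tau (Suc m)) = Suc m" using Suc ne
    by (simp only: tau.simps, subst degree_mult_eq) auto
  moreover have "lead_coeff (tau (Suc m)) = 1" using Suc
    by (simp add: lead_coeff_mult del: mult_pCons_right)
  ultimately show ?case by simp
qed

lemma poly_tau_Suc: "poly (tau (Suc m)) x = poly (tau m) x * (x - lam (real m))"
  by (simp add: algebra_simps)

lemma T_rec: "poly (tau (Suc m)) (lam y) = poly (tau m) (lam y) * ((y - real m) * (y + real m + 1))"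
  by (simp add: lam_def algebra_simps)

lemma T_up: "poly (tau (Suc m)) (lam (y + 1)) = poly (tau m) (lam y) * ((y + real m + 1) * (y + real m + 2))"
proof (induction m)
  case 0 then show ?case by (simp add: lam_def algebra_simps)
next
  case (Suc m)
  have "poly (tau (Suc (Suc m))) (lam (y + 1)) = poly (tau (Suc m)) (lam (y + 1)) * (lam (y+1) - lam (real (Suc m)))"
    by (simp only: poly_tau_Suc)
  also have "\<dots> = poly (tau m) (lam y) * ((y + real m + 1) * (y + real m + 2)) * (lam (y+1) - lam (real (Suc m)))"
    using Suc by simp
  also have "\<dots> = poly (tau m) (lam y) * ((y - real m) * (y + real m + 1)) * ((y + real (Suc m) + 1) * (y + real (Suc m) + 2))"
    by (simp add: lam_def algebra_simps)
  also have "\<dots> = poly (tau (Suc m)) (lam y) * ((y + real (Suc m) + 1) * (y + real (Suc m) + 2))"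
    by (simp only: T_rec)
  finally show ?case .
qed

lemma T_down: "poly (tau (Suc m)) (lam (y - 1)) = poly (tau m) (lam y) * ((y - real m) * (y - real m - 1))"
proof (induction m)
  case 0 then show ?case by (simp add: lam_def algebra_simps)
next
  case (Suc m)
  have "poly (tau (Suc (Suc m))) (lam (y - 1)) = poly (tau (Suc m)) (lam (y - 1)) * (lam (y - 1) - lam (real (Suc m)))"
    by (simp only: poly_tau_Suc)
  also have "\<dots> = poly (tau m) (lam y) * ((y - real m) * (y - real m - 1)) * (lam (y - 1) - lam (real (Suc m)))"
    using Suc by simp
  also have "\<dots> = poly (tau m) (lam y) * ((y - real m) * (y + real m + 1)) * ((y - real (Suc m)) * (y - real (Suc m) - 1))"
    by (simp add: lam_def algebra_simps)
  also have "\<dots> = poly (tau (Suc m)) (lam y) * ((y - real (Suc m)) * (y - real (Suc m) - 1))"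
    by (simp only: T_rec)
  finally show ?case .
qed

lemma poch2: fixes a :: real shows "pochhammer (a + 2) n * (a * (a + 1)) = pochhammer a (Suc n) * (a + real n + 1)"
proof -
  have "pochhammer a (Suc (Suc n)) = a * ((a + 1) * pochhammer (a + 2) n)"
    by (simp add: pochhammer_rec add.assoc)
  moreover have "pochhammer a (Suc (Suc n)) = pochhammer a (Suc n) * (a + real n + 1)"
    by (simp add: pochhammer_Suc add.assoc)
  ultimately show ?thesis by (simp add: algebra_simps)
qed

locale LP =
  fixes d :: nat and r s :: real
  assumes r_gt: "r > -1" and s_gt: "s > -1" and rs: "r + s = 0"
begin

abbreviation th where "th i \<equiv> theta d r s i"

lemma th_eq: "th i = lam (real (d - i))"
proof -
  have "real (d - i) + r + s + 1 = real (d - i) + 1" using rs by simp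
  thus ?thesis by (simp add: theta_def lam_def)
qed

lemma lam_inj: "y \<ge> 0 \<Longrightarrow> z \<ge> 0 \<Longrightarrow> lam y = lam z \<Longrightarrow> y = z"
proof (rule ccontr)
  assume a: "y \<ge> 0" "z \<ge> 0" "lam y = lam z" "y \<noteq> z"
  have "lam y - lam z = (y - z) * (y + z + 1)" by (simp add: lam_def algebra_simps)
  moreover have "y + z + 1 > 0" using a by simp
  ultimately show False using a by simp
qed

lemma th_inj: "i \<le> d \<Longrightarrow> j \<le> d \<Longrightarrow> th i = th j \<Longrightarrow> i = j"
  using lam_inj[of "real (d - i)" "real (d - j)"] by (simp add: th_eq)

lemma uniq0:
  assumes "degree p \<le> d" "\<forall>i\<le>d. poly p (th i) = 0" shows "p = 0"
proof (rule ccontr)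
  assume ne: "p \<noteq> 0"
  have fin: "finite {x. poly p x = 0}" using ne poly_roots_finite by blast
  have "th ` {..d} \<subseteq> {x. poly p x = 0}" using assms by auto
  hence "card (th ` {..d}) \<le> card {x. poly p x = 0}" using fin card_mono by blast
  moreover have "card (th ` {..d}) = Suc d"
    by (subst card_image) (auto intro: inj_onI th_inj)
  moreover have "card {x. poly p x = 0} \<le> degree p" using card_poly_roots_bound[OF ne] .
  ultimately show False using assms by simp
qed

lemma uniq:
  assumes "degree p \<le> d" "degree q \<le> d" "\<forall>i\<le>d. poly p (th i) = poly q (th i)" shows "p = q"
proof -
  have "p - q = 0" by (rule uniq0) (use assms in \<open>auto intro: degree_diff_le\<close>)
  thus ?thesis by simp
qed

definition lag :: "nat \<Rightarrow> real poly" where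
  "lag j = smult (1 / (\<Prod>k\<in>{..d}-{j}. (th j - th k))) (\<Prod>k\<in>{..d}-{j}. [:- th k, 1:])"

lemma degree_lag: "j \<le> d \<Longrightarrow> degree (lag j) \<le> d"
proof -
  assume j: "j \<le> d"
  have "degree (\<Prod>k\<in>{..d}-{j}. [:- th k, 1:]) \<le> (\<Sum>k\<in>{..d}-{j}. degree [:- th k, 1:])"
    by (rule degree_prod_sum_le[simplified o_def]) simp
  also have "\<dots> = card ({..d}-{j})" by simp
  also have "\<dots> = d" using j by simp
  finally show ?thesis unfolding lag_def by simp
qed

lemma poly_lag: "j \<le> d \<Longrightarrow> i \<le> d \<Longrightarrow> poly (lag j) (th i) = (if i = j then 1 else 0)"
proof -
  assume j: "j \<le> d" and i: "i \<le> d"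
  have nz: "(\<Prod>k\<in>{..d}-{j}. (th j - th k)) \<noteq> 0"
    using th_inj j by (auto simp: prod_zero_iff)
  show ?thesis
  proof (cases "i = j")
    case True then show ?thesis using nz by (simp add: lag_def poly_prod)
  next
    case False
    have "(\<Prod>k\<in>{..d}-{j}. poly [:- th k, 1:] (th i)) = 0"
      using False i by (subst prod_zero_iff) auto
    then show ?thesis using False by (simp add: lag_def poly_prod)
  qed
qed

definition interp :: "(nat \<Rightarrow> real) \<Rightarrow> real poly" where
  "interp v = (\<Sum>j\<le>d. smult (v j) (lag j))"

lemma degree_interp: "degree (interp v) \<le> d"
  unfolding interp_def by (rule degree_sum_le) (auto intro: order.trans[OF degree_smult_le] degree_lag)

lemma poly_interp: "i \<le> d \<Longrightarrow> poly (interp v) (th i) = v i"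
proof -
  assume i: "i \<le> d"
  have "poly (interp v) (th i) = (\<Sum>j\<le>d. (if j = i then v j else 0))"
    unfolding interp_def poly_sum by (intro sum.cong) (auto simp: poly_lag i)
  also have "\<dots> = v i" using i by (simp add: sum.delta)
  finally show ?thesis .
qed

lemma the_interp:
  "(THE g. degree g \<le> d \<and> (\<forall>i\<le>d. poly g (th i) = v i)) = interp v"
  by (rule the_equality) (auto simp: degree_interp poly_interp intro!: uniq)

definition Rs :: "real poly \<Rightarrow> nat \<Rightarrow> real" where
  "Rs f i = (if i < d then bs d r s i * poly f (th (i + 1)) else 0)
        + as d r s i * poly f (th i)
        + (if 0 < i then cs d r s i * poly f (th (i - 1)) else 0)"

lemma opL_eq: "opL d r s f = interp (\<lambda>i. th i * poly f (th i))"
  unfolding opL_def by (rule the_interp)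

lemma opLs_eq: "opLs d r s f = interp (Rs f)"
  unfolding opLs_def Rs_def by (rule the_interp)

end

context LP begin

definition Bf :: "real \<Rightarrow> real" where "Bf y = (r - y) * (y + real d + 1) / (2 * (2 * y + 1))"
definition Cf :: "real \<Rightarrow> real" where "Cf y = (real d - y) * (- y - r - 1) / (2 * (2 * y + 1))"

lemma aux1: "(p::real) \<noteq> 0 \<Longrightarrow> A * (p * k / D) / p = A * (k / D)"
  by (cases "D = 0") (simp_all add: field_simps)

lemma aux2: "(p::real) \<noteq> 0 \<Longrightarrow> b \<noteq> 0 \<Longrightarrow> A * p / (p * X * Y / b) = A * (b / (X * Y))"
  by (cases "X * Y = 0") (auto simp: field_simps)

lemma aux4: "(y::real) \<noteq> 0 \<Longrightarrow> y * A * (N / (2 * y * Q)) = A * N / (2 * Q)"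
  by (cases "Q = 0") (simp_all add: field_simps)

lemma s_eq: "s = - r" using rs by simp

lemma bs_eq: assumes i: "i < d" shows "bs d r s i = Bf (real (d - i))"
proof -
  define y where "y = real (d - i)"
  have y: "y = real d - real i" "y \<ge> 1" using i by (auto simp: y_def)
  have a1: "2 * real d - 2 * real i + r + s + 2 = 2*y + 2" and a0: "2 * real d - 2 * real i + r + s = 2*y"
    using y s_eq by auto
  have "pochhammer (2*y) (Suc i) > 0" by (rule pochhammer_pos) (use y in simp)
  hence pne: "pochhammer (2*y) (Suc i) \<noteq> 0" by simp
  have den: "2*y*(2*y+1) \<noteq> 0" using y by simp
  have P: "pochhammer (2*y+2) i = pochhammer (2*y) (Suc i) * (2*y + real i + 1) / (2*y*(2*y+1))"
    using poch2[of "2*y" i] den by (simp add: eq_divide_eq)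
  have e: "real i - real d - s = r - y" using y(1) s_eq by simp
  have "bs d r s i = real (d-i) * (real i - real d - s) * pochhammer (2*y+2) i / pochhammer (2*y) (i+1)"
    unfolding bs_def a1 a0 using i by simp
  also have "\<dots> = y * (r - y) * ((2*y + real i + 1) / (2*y*(2*y+1)))"
    unfolding P e y_def[symmetric] using pne by (simp only: aux1 Suc_eq_plus1 not_False_eq_True)
  also have "\<dots> = Bf y"
  proof -
    have e2: "2*y + real i + 1 = y + real d + 1" using y(1) by simp
    have "y \<noteq> 0" "2*y+1 \<noteq> 0" using y by auto
    thus ?thesis unfolding Bf_def e2 by (simp only: aux4 not_False_eq_True)
  qed
  finally show ?thesis by (simp add: y_def)
qed

lemma cs_eq: assumes i: "i \<le> d" shows "cs d r s i = Cf (real (d - i))"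
proof (cases "i = 0")
  case True then show ?thesis by (simp add: cs_def Cf_def)
next
  case False
  define n where "n = d - i"
  define b where "b = real n + 1"
  have b1: "real d - real i + r + s + 1 = b" and b2: "real d - real i + r + s + 2 = b + 1"
    using i s_eq by (auto simp: b_def n_def)
  have bpos: "b > 0" by (simp add: b_def)
  have "pochhammer b (Suc (Suc n)) = b * pochhammer (b+1) (Suc n)" by (simp only: pochhammer_rec)
  moreover have "pochhammer b (Suc (Suc n)) = pochhammer b n * (b + real n) * (b + real n + 1)"
    by (simp add: pochhammer_Suc algebra_simps)
  ultimately have P: "pochhammer (b+1) (Suc n) = pochhammer b n * (b + real n) * (b + real n + 1) / b"
    using bpos by (simp add: field_simps)
  have "pochhammer b n > 0" by (rule pochhammer_pos) (rule bpos)
  hence pne: "pochhammer b n \<noteq> 0" by simp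
  have e: "d - i + 1 = Suc n" by (simp add: n_def)
  have "cs d r s i = real i * (real i - real d - r - 1) * pochhammer b n / pochhammer (b+1) (Suc n)"
    unfolding cs_def b1 b2 e using False i by (simp add: n_def)
  also have "\<dots> = real i * (real i - real d - r - 1) * (b / ((b + real n) * (b + real n + 1)))"
    unfolding P using pne bpos by (simp only: aux2 less_imp_neq[OF bpos, symmetric] not_False_eq_True)
  also have "b / ((b + real n) * (b + real n + 1)) = 1 / (2 * (2 * real n + 1))"
  proof -
    have "(b + real n) * (b + real n + 1) = (2*real n+1) * (2*b)" by (simp add: b_def algebra_simps)
    moreover have "2*real n+1 \<noteq> 0" "b \<noteq> 0" using bpos by auto
    ultimately show ?thesis by simp
  qed
  also have "real i * (real i - real d - r - 1) * (1 / (2 * (2 * real n + 1))) = Cf (real n)"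
  proof -
    have "real d - real n = real i" "- real n - r - 1 = real i - real d - r - 1"
      using i by (simp_all add: n_def of_nat_diff)
    thus ?thesis unfolding Cf_def by simp
  qed
  finally show ?thesis by (simp add: n_def)
qed

lemma as_eq: assumes i: "i < d" shows "as d r s i = (real d - r) / 2"
proof -
  define y where "y = real (d - i)"
  have y: "y \<ge> 1" using i by (simp add: y_def)
  have "as d r s i = - Bf y - Cf y"
    unfolding as_def thetas_def using bs_eq[OF i] cs_eq[of i] i by (simp add: y_def)
  also have "\<dots> = (- ((r - y) * (y + real d + 1)) - ((real d - y) * (- y - r - 1))) / (2 * (2 * y + 1))"
    unfolding Bf_def Cf_def by (simp only: diff_divide_distrib minus_divide_left)
  also have "- ((r - y) * (y + real d + 1)) - ((real d - y) * (- y - r - 1)) = (2*y+1)*(real d-r)" by algebra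
  also have "(2*y+1)*(real d-r)/(2*(2*y+1)) = (real d - r) / 2"
  proof -
    have "2*y+1 \<noteq> 0" using y by simp
    thus ?thesis by (simp add: field_simps)
  qed
  finally show ?thesis .
qed

lemma as_d: "as d r s d = - cs d r s d"
  unfolding as_def thetas_def bs_def by simp

lemma node: assumes i: "i \<le> d"
  shows "Rs f i = Bf (real (d - i)) * poly f (lam (real (d - i) - 1))
     + (real d - r) / 2 * poly f (lam (real (d - i)))
     + Cf (real (d - i)) * poly f (lam (real (d - i) + 1))"
proof (cases "i < d")
  case True
  have t1: "th (i + 1) = lam (real (d - i) - 1)" using True by (simp add: th_eq of_nat_diff algebra_simps)
  show ?thesis
  proof (cases "i = 0")
    case True
    then show ?thesis using \<open>i < d\<close> t1 unfolding Rs_def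
      by (simp add: bs_eq as_eq th_eq Cf_def)
  next
    case False
    have t2: "th (i - 1) = lam (real (d - i) + 1)" using False i by (simp add: th_eq of_nat_diff algebra_simps)
    show ?thesis using \<open>i < d\<close> t1 t2 False unfolding Rs_def
      by (simp add: bs_eq as_eq cs_eq th_eq)
  qed
next
  case False
  hence id: "i = d" using i by simp
  show ?thesis
  proof (cases "d = 0")
    case True
    then show ?thesis using id unfolding Rs_def as_def thetas_def bs_def cs_def Bf_def Cf_def
      by (simp add: th_eq lam_def)
  next
    case False
    have "lam (-1) = lam 0" by (simp add: lam_def)
    then show ?thesis using id False unfolding Rs_def
      by (simp add: as_d cs_eq th_eq Bf_def Cf_def field_simps)
  qed
qed

end

lemma smult_sum_right: "smult c (sum f A) = (\<Sum>x\<in>A. smult c (f x))"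
  by (induction A rule: infinite_finite_induct) (simp_all add: smult_add_right)

context LP begin

abbreviation Ls where "Ls f \<equiv> opLs d r s f"
abbreviation Lo where "Lo f \<equiv> opL d r s f"

lemma interp_add: "interp (\<lambda>i. u i + v i) = interp u + interp v"
  unfolding interp_def by (simp add: smult_add_left sum.distrib)

lemma interp_smult: "interp (\<lambda>i. c * v i) = smult c (interp v)"
  unfolding interp_def by (simp add: smult_sum_right)

lemma Rs_add: "Rs (f + g) i = Rs f i + Rs g i"
  unfolding Rs_def by (simp add: algebra_simps)

lemma Rs_smult: "Rs (smult c f) i = c * Rs f i"
  unfolding Rs_def by (simp add: algebra_simps)

lemma Ls_add: "Ls (f + g) = Ls f + Ls g"
proof -
  have "Rs (f + g) = (\<lambda>i. Rs f i + Rs g i)" by (rule ext, rule Rs_add)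
  thus ?thesis unfolding opLs_eq by (simp add: interp_add)
qed

lemma Ls_smult: "Ls (smult c f) = smult c (Ls f)"
proof -
  have "Rs (smult c f) = (\<lambda>i. c * Rs f i)" by (rule ext, rule Rs_smult)
  thus ?thesis unfolding opLs_eq by (simp add: interp_smult)
qed

lemma Ls_diff: "Ls (f - g) = Ls f - Ls g"
  using Ls_add[of "f - g" g] by (simp add: algebra_simps)

lemma Ls_zero: "Ls 0 = 0"
  using Ls_smult[of 0 0] by simp

lemma Lo_add: "Lo (f + g) = Lo f + Lo g"
  unfolding opL_eq by (simp add: algebra_simps interp_add)

lemma Lo_smult: "Lo (smult c f) = smult c (Lo f)"
  unfolding opL_eq by (simp add: interp_smult[symmetric] algebra_simps)

lemma deg_Ls: "degree (Ls f) \<le> d" unfolding opLs_eq by (rule degree_interp)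
lemma deg_Lo: "degree (Lo f) \<le> d" unfolding opL_eq by (rule degree_interp)

lemma poly_Ls: "i \<le> d \<Longrightarrow> poly (Ls f) (th i) = Rs f i"
  unfolding opLs_eq by (rule poly_interp)

lemma poly_Lo: "i \<le> d \<Longrightarrow> poly (Lo f) (th i) = th i * poly f (th i)"
  unfolding opL_eq by (rule poly_interp)

definition hc :: real where "hc = (real d - r) / 2"

definition phi :: "nat \<Rightarrow> real" where
  "phi k = (real d - real k) * (- real k - r - 1) * (real k + 1)"

lemma key_identity:
  assumes y: "y \<ge> 0"
  shows "Bf y * ((y - real k) * (y - real k - 1)) + hc * ((y - real k) * (y + real k + 1))
     + Cf y * ((y + real k + 1) * (y + real k + 2)) = (real k + 1) * ((y - real k) * (y + real k + 1)) + phi k"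
proof -
  define D where "D = 2 * (2 * y + 1)"
  have D: "D \<noteq> 0" using y by (simp add: D_def)
  have bB: "Bf y * D = (r - y) * (y + real d + 1)" using D by (simp add: Bf_def D_def)
  have cB: "Cf y * D = (real d - y) * (- y - r - 1)" using D by (simp add: Cf_def D_def)
  have hB: "hc * D = (real d - r) * (2 * y + 1)" by (simp add: hc_def D_def)
  have "D * (Bf y * ((y - real k) * (y - real k - 1)) + hc * ((y - real k) * (y + real k + 1))
     + Cf y * ((y + real k + 1) * (y + real k + 2)))
     = (Bf y * D) * ((y - real k) * (y - real k - 1)) + (hc * D) * ((y - real k) * (y + real k + 1))
     + (Cf y * D) * ((y + real k + 1) * (y + real k + 2))"
    by algebra
  also have "\<dots> = D * ((real k + 1) * ((y - real k) * (y + real k + 1)) + phi k)"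
    unfolding bB cB hB unfolding D_def phi_def by algebra
  finally show ?thesis using D by simp
qed

lemma Ls_tau:
  assumes k: "Suc k \<le> d"
  shows "Ls (tau (Suc k)) = smult (real (Suc k)) (tau (Suc k)) + smult (phi k) (tau k)"
proof (rule uniq)
  show "degree (Ls (tau (Suc k))) \<le> d" by (rule deg_Ls)
  have "degree (smult (real (Suc k)) (tau (Suc k))) \<le> d" using k tau_deg[of "Suc k"] by simp
  moreover have "degree (smult (phi k) (tau k)) \<le> d" using k tau_deg[of k] by simp
  ultimately show "degree (smult (real (Suc k)) (tau (Suc k)) + smult (phi k) (tau k)) \<le> d"
    by (simp add: degree_add_le)
  show "\<forall>i\<le>d. poly (Ls (tau (Suc k))) (th i) = poly (smult (real (Suc k)) (tau (Suc k)) + smult (phi k) (tau k)) (th i)"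
  proof (intro allI impI)
    fix i assume i: "i \<le> d"
    define y where "y = real (d - i)"
    have y: "y \<ge> 0" by (simp add: y_def)
    have "poly (Ls (tau (Suc k))) (th i) = Rs (tau (Suc k)) i" using i by (rule poly_Ls)
    also have "\<dots> = Bf y * poly (tau (Suc k)) (lam (y - 1)) + hc * poly (tau (Suc k)) (lam y)
       + Cf y * poly (tau (Suc k)) (lam (y + 1))" using node[OF i] by (simp add: y_def hc_def)
    also have "\<dots> = poly (tau k) (lam y) * (Bf y * ((y - real k) * (y - real k - 1)) + hc * ((y - real k) * (y + real k + 1))
     + Cf y * ((y + real k + 1) * (y + real k + 2)))"
      unfolding T_up T_down by (simp only: T_rec) (simp add: algebra_simps)
    also have "\<dots> = poly (tau k) (lam y) * ((real k + 1) * ((y - real k) * (y + real k + 1)) + phi k)"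
      using key_identity[OF y] by simp
    also have "\<dots> = poly (smult (real (Suc k)) (tau (Suc k)) + smult (phi k) (tau k)) (th i)"
      unfolding th_eq y_def[symmetric] by (simp only: poly_add poly_smult T_rec) (simp add: algebra_simps)
    finally show "poly (Ls (tau (Suc k))) (th i) = poly (smult (real (Suc k)) (tau (Suc k)) + smult (phi k) (tau k)) (th i)" .
  qed
qed

lemma Ls_one: "Ls 1 = 0"
proof (rule uniq)
  show "degree (Ls 1) \<le> d" by (rule deg_Ls)
  show "degree (0::real poly) \<le> d" by simp
  show "\<forall>i\<le>d. poly (Ls 1) (th i) = poly 0 (th i)"
  proof (intro allI impI)
    fix i assume i: "i \<le> d"
    have "poly (Ls 1) (th i) = Rs 1 i" using i by (rule poly_Ls)
    also have "\<dots> = 0" unfolding Rs_def as_def thetas_def using i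
      by (auto simp: bs_def cs_def)
    finally show "poly (Ls 1) (th i) = poly 0 (th i)" by simp
  qed
qed

end

definition low :: "nat \<Rightarrow> real poly \<Rightarrow> bool" where
  "low m g \<longleftrightarrow> (\<forall>k\<ge>m. coeff g k = 0)"

lemma low_add: "low m f \<Longrightarrow> low m g \<Longrightarrow> low m (f + g)" by (simp add: low_def)
lemma low_diff: "low m f \<Longrightarrow> low m g \<Longrightarrow> low m (f - g)" by (simp add: low_def)
lemma low_smult: "low m f \<Longrightarrow> low m (smult c f)" by (simp add: low_def)
lemma low_mono: "low m f \<Longrightarrow> m \<le> m' \<Longrightarrow> low m' f" by (simp add: low_def)
lemma low_0: "low 0 f \<longleftrightarrow> f = 0" by (auto simp: low_def poly_eq_iff)
lemma low_zero[simp]: "low m 0" by (simp add: low_def)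
lemma low_Suc: "low (Suc m) f \<longleftrightarrow> degree f \<le> m"
  by (auto simp: low_def intro: degree_le coeff_eq_0)
lemma low_SucD: "low (Suc m) f \<Longrightarrow> coeff f m = 0 \<Longrightarrow> low m f"
  unfolding low_def
proof (intro allI impI)
  fix k assume "\<forall>k\<ge>Suc m. coeff f k = 0" "coeff f m = 0" "m \<le> k"
  then show "coeff f k = 0" by (cases "k = m") auto
qed
lemma low_one: "low 1 f \<Longrightarrow> f = smult (coeff f 0) 1"
  unfolding poly_eq_iff
proof
  fix n assume "low 1 f"
  then show "coeff f n = coeff (smult (coeff f 0) 1) n" by (cases n) (auto simp: low_def)
qed

lemma alg1: fixes X Y h t :: "real poly"
  shows "(X + smult a Y) - smult (real (Suc m)) (h + smult a t) = (X - smult (real m) h) - h + smult a (Y - smult (real (Suc m)) t)"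
  by (simp add: smult_add_right smult_diff_right smult_add_left algebra_simps)
lemma alg2: fixes X h :: "real poly"
  shows "X - smult n h = (X - smult m h) + smult (m - n) h"
  by (simp add: smult_diff_left algebra_simps)
lemma alg3: fixes A B g h :: "real poly"
  shows "(A + B) - smult n (g + h) = (A - smult n g) + (B - smult n h)"
  by (simp add: smult_add_right algebra_simps)
lemma alg4: fixes Lg g Lm mo :: "real poly"
  shows "Lg - smult n g = Lm - smult n mo \<Longrightarrow> Lm - Lg = smult n (mo - g)"
  by (simp add: smult_diff_right algebra_simps eq_diff_eq diff_eq_eq)

context LP begin

lemma K: "m \<le> d \<Longrightarrow> low (Suc m) f \<Longrightarrow> low m (Ls f - smult (real m) f)"
proof (induction m arbitrary: f)
  case 0
  have "f = smult (coeff f 0) 1" using 0 by (intro low_one) simp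
  hence "Ls f = 0" using Ls_smult[of "coeff f 0" 1] Ls_one by simp
  then show ?case by (simp add: low_0)
next
  case (Suc m)
  define a where "a = coeff f (Suc m)"
  define h where "h = f - smult a (tau (Suc m))"
  have tl: "low (Suc (Suc m)) (tau (Suc m))" using tau_deg[of "Suc m"] by (simp add: low_Suc)
  have "low (Suc (Suc m)) h" unfolding h_def using Suc.prems tl by (intro low_diff low_smult)
  moreover have "coeff h (Suc m) = 0" using tau_deg[of "Suc m"] by (simp add: h_def a_def)
  ultimately have hl: "low (Suc m) h" by (rule low_SucD)
  have IH: "low m (Ls h - smult (real m) h)" using Suc.IH[OF _ hl] Suc.prems by simp
  have f: "f = h + smult a (tau (Suc m))" by (simp add: h_def)
  have "Ls f - smult (real (Suc m)) f = (Ls h - smult (real m) h) - h + smult a (Ls (tau (Suc m)) - smult (real (Suc m)) (tau (Suc m)))"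
    unfolding f Ls_add Ls_smult by (rule alg1)
  also have "\<dots> = (Ls h - smult (real m) h) - h + smult a (smult (phi m) (tau m))"
    using Ls_tau[OF Suc.prems(1)] by simp
  finally have e: "Ls f - smult (real (Suc m)) f = (Ls h - smult (real m) h) - h + smult a (smult (phi m) (tau m))" .
  have "low (Suc m) (tau m)" using tau_deg[of m] by (simp add: low_Suc)
  then show ?case unfolding e
    by (intro low_add[OF low_diff[OF low_mono[OF IH] hl] low_smult[OF low_smult]]) simp_all
qed

lemma S: "m \<le> n \<Longrightarrow> n \<le> d \<Longrightarrow> low m f \<Longrightarrow> \<exists>g. low m g \<and> Ls g - smult (real n) g = f"
proof (induction m arbitrary: f)
  case 0
  then show ?case by (auto simp: low_0 Ls_zero)
next
  case (Suc m)
  define a where "a = coeff f m"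
  define g0 where "g0 = smult (a / (real m - real n)) (monom 1 m)"
  have mn: "real m - real n \<noteq> 0" using Suc.prems by simp
  have g0l: "low (Suc m) g0" unfolding g0_def by (simp add: low_Suc degree_monom_le)
  define q where "q = Ls g0 - smult (real n) g0"
  have q: "q = (Ls g0 - smult (real m) g0) + smult (real m - real n) g0"
    unfolding q_def by (rule alg2)
  have Kg: "low m (Ls g0 - smult (real m) g0)" using K[OF _ g0l] Suc.prems by simp
  have ql: "low (Suc m) q" unfolding q
    by (intro low_add[OF low_mono[OF Kg] low_smult[OF g0l]]) simp
  have c1: "coeff (Ls g0 - smult (real m) g0) m = 0" using Kg unfolding low_def by blast
  have "coeff q m = coeff (Ls g0 - smult (real m) g0) m + (real m - real n) * coeff g0 m"
    unfolding q by (simp only: coeff_add coeff_smult)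
  also have "\<dots> = a" using Suc.prems by (subst c1) (simp add: g0_def)
  finally have "coeff q m = a" .
  hence "coeff (f - q) m = 0" by (simp add: a_def)
  hence "low m (f - q)" using Suc.prems(3) ql by (intro low_SucD[OF low_diff]) auto
  moreover have "m \<le> n" "n \<le> d" using Suc.prems by auto
  ultimately obtain g1 where g1: "low m g1" "Ls g1 - smult (real n) g1 = f - q"
    using Suc.IH[of "f - q"] by blast
  have "Ls (g0 + g1) - smult (real n) (g0 + g1) = q + (f - q)"
    unfolding Ls_add alg3 g1(2) q_def ..
  moreover have "low (Suc m) (g0 + g1)"
    by (intro low_add[OF g0l low_mono[OF g1(1)]]) simp
  ultimately show ?case by auto
qed

lemma eigen: assumes n: "n \<le> d"
  shows "\<exists>p. degree p = n \<and> coeff p n = 1 \<and> Ls p = smult (real n) p"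
proof -
  define f where "f = Ls (monom 1 n) - smult (real n) (monom 1 n)"
  have "low n f" unfolding f_def by (rule K[OF n]) (simp add: low_Suc degree_monom_le)
  then obtain g where g: "low n g" "Ls g - smult (real n) g = f" using S[OF order_refl n] by blast
  define p where "p = monom 1 n - g"
  have "Ls p = smult (real n) p"
    using g(2) unfolding p_def f_def Ls_diff by (rule alg4)
  moreover have c: "coeff p n = 1"
  proof -
    have "coeff g n = 0" using g(1) unfolding low_def by blast
    thus ?thesis by (simp add: p_def)
  qed
  moreover have "degree p = n"
  proof (rule antisym)
    have "\<forall>i>n. coeff g i = 0" using g(1) unfolding low_def by auto
    thus "degree p \<le> n" unfolding p_def by (intro degree_le) simp
    show "n \<le> degree p" using c by (intro le_degree) simp
  qed
  ultimately show ?thesis by blast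
qed

end

context LP begin

lemma r_lt: "r < 1" using s_gt s_eq by simp

lemma bs_neg: "i < d \<Longrightarrow> bs d r s i < 0"
proof -
  assume i: "i < d"
  define y where "y = real (d - i)"
  have y: "y \<ge> 1" using i by (simp add: y_def)
  have "(r - y) * (y + real d + 1) < 0" using y r_lt by (intro mult_neg_pos) auto
  moreover have "2 * (2 * y + 1) > 0" using y by simp
  ultimately have "Bf y < 0" unfolding Bf_def by (simp add: divide_neg_pos)
  thus ?thesis using bs_eq[OF i] by (simp add: y_def)
qed

lemma cs_neg: "0 < i \<Longrightarrow> i \<le> d \<Longrightarrow> cs d r s i < 0"
proof -
  assume i: "0 < i" "i \<le> d"
  define y where "y = real (d - i)"
  have y: "y \<ge> 0" "real d - y > 0" using i by (auto simp: y_def of_nat_diff)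
  have "(real d - y) * (- y - r - 1) < 0" using y r_gt by (intro mult_pos_neg) auto
  moreover have "2 * (2 * y + 1) > 0" using y by simp
  ultimately have "Cf y < 0" unfolding Cf_def by (simp add: divide_neg_pos)
  thus ?thesis using cs_eq[OF i(2)] by (simp add: y_def)
qed

primrec w :: "nat \<Rightarrow> real" where
  "w 0 = 1"
| "w (Suc i) = w i * bs d r s i / cs d r s (Suc i)"

lemma w_pos: "i \<le> d \<Longrightarrow> w i > 0"
proof (induction i)
  case 0 then show ?case by simp
next
  case (Suc i)
  have "bs d r s i < 0" "cs d r s (Suc i) < 0" using Suc.prems by (auto intro: bs_neg cs_neg)
  moreover have "w i > 0" using Suc by simp
  ultimately show ?case by (simp add: mult_neg_neg divide_neg_neg mult_pos_neg)
qed

lemma w_rel: "i < d \<Longrightarrow> w i * bs d r s i = w (Suc i) * cs d r s (Suc i)"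
proof -
  assume i: "i < d"
  have "cs d r s (Suc i) \<noteq> 0" using cs_neg[of "Suc i"] i by simp
  thus ?thesis by simp
qed

definition ip :: "real poly \<Rightarrow> real poly \<Rightarrow> real" where
  "ip f g = (\<Sum>i\<le>d. w i * poly f (th i) * poly g (th i))"

lemma ip_sym: "ip f g = ip g f" unfolding ip_def by (simp add: algebra_simps)

lemma ip_add: "ip (f + g) h = ip f h + ip g h"
  unfolding ip_def by (simp add: algebra_simps sum.distrib)

lemma ip_smult: "ip (smult c f) h = c * ip f h"
  unfolding ip_def by (simp add: algebra_simps sum_distrib_left)

lemma ip_diff: "ip (f - g) h = ip f h - ip g h"
  unfolding ip_def by (simp add: algebra_simps sum_subtractf)

lemma ip_zero: "ip 0 h = 0" unfolding ip_def by simp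

lemma ip_sum: "ip (\<Sum>i\<in>A. smult (c i) (g i)) h = (\<Sum>i\<in>A. c i * ip (g i) h)"
  by (induction A rule: infinite_finite_induct) (simp_all add: ip_zero ip_add ip_smult)

lemma ip_pos: assumes "degree f \<le> d" "f \<noteq> 0" shows "ip f f > 0"
proof -
  obtain i where i: "i \<le> d" "poly f (th i) \<noteq> 0" using uniq0[OF assms(1)] assms(2) by blast
  show ?thesis unfolding ip_def
  proof (rule sum_pos2[of _ i])
    have sq: "0 < poly f (th i) * poly f (th i)" using i(2)
      by (auto simp: zero_less_mult_iff linorder_neq_iff)
    show "0 < w i * poly f (th i) * poly f (th i)" using sq w_pos[OF i(1)]
      by (simp add: mult.assoc)
    show "\<And>j. j \<in> {..d} \<Longrightarrow> 0 \<le> w j * poly f (th j) * poly f (th j)"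
      using w_pos by (auto simp: mult.assoc less_imp_le)
  qed (use i in auto)
qed

lemma shift_sum:
  "(\<Sum>i\<le>d. (if i < d then w i * bs d r s i * G i * F (i + 1) else 0))
 = (\<Sum>i\<le>d. (if 0 < i then w i * cs d r s i * F i * G (i - 1) else 0))"
proof (cases d)
  case 0 then show ?thesis by simp
next
  case (Suc n)
  have D: "{..d} = {..Suc n}" using Suc by simp
  have "(\<Sum>i\<le>d. (if 0 < i then w i * cs d r s i * F i * G (i - 1) else 0))
      = (\<Sum>i\<le>n. w (Suc i) * cs d r s (Suc i) * F (Suc i) * G i)"
    unfolding D by (subst sum.atMost_Suc_shift) simp
  also have "\<dots> = (\<Sum>i\<le>n. w i * bs d r s i * G i * F (i + 1))"
    by (intro sum.cong refl) (use w_rel Suc in simp)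
  also have "\<dots> = (\<Sum>i\<le>d. (if i < d then w i * bs d r s i * G i * F (i + 1) else 0))"
    unfolding D by (subst sum.atMost_Suc) (use Suc in simp)
  finally show ?thesis by simp
qed

lemma ip_Ls_expand: "ip (Ls f) g =
        (\<Sum>i\<le>d. (if i < d then w i * bs d r s i * poly g (th i) * poly f (th (i + 1)) else 0))
      + (\<Sum>i\<le>d. w i * as d r s i * poly f (th i) * poly g (th i))
      + (\<Sum>i\<le>d. (if 0 < i then w i * cs d r s i * poly g (th i) * poly f (th (i - 1)) else 0))"
proof -
  have "ip (Ls f) g = (\<Sum>i\<le>d. (if i < d then w i * bs d r s i * poly g (th i) * poly f (th (i + 1)) else 0)
      + w i * as d r s i * poly f (th i) * poly g (th i)
      + (if 0 < i then w i * cs d r s i * poly g (th i) * poly f (th (i - 1)) else 0))"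
    unfolding ip_def
  proof (intro sum.cong refl)
    fix i assume "i \<in> {..d}"
    hence "poly (Ls f) (th i) = Rs f i" by (intro poly_Ls) simp
    thus "w i * poly (Ls f) (th i) * poly g (th i) =
      (if i < d then w i * bs d r s i * poly g (th i) * poly f (th (i + 1)) else 0)
      + w i * as d r s i * poly f (th i) * poly g (th i)
      + (if 0 < i then w i * cs d r s i * poly g (th i) * poly f (th (i - 1)) else 0)"
      unfolding Rs_def by (auto simp: algebra_simps)
  qed
  thus ?thesis by (simp add: sum.distrib)
qed

lemma Ls_selfadj: "ip (Ls f) g = ip f (Ls g)"
proof -
  have a: "(\<Sum>i\<le>d. (if i < d then w i * bs d r s i * poly g (th i) * poly f (th (i + 1)) else 0))
     = (\<Sum>i\<le>d. (if 0 < i then w i * cs d r s i * poly f (th i) * poly g (th (i - 1)) else 0))"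
    by (rule shift_sum)
  have b: "(\<Sum>i\<le>d. (if i < d then w i * bs d r s i * poly f (th i) * poly g (th (i + 1)) else 0))
     = (\<Sum>i\<le>d. (if 0 < i then w i * cs d r s i * poly g (th i) * poly f (th (i - 1)) else 0))"
    by (rule shift_sum)
  have c: "(\<Sum>i\<le>d. w i * as d r s i * poly f (th i) * poly g (th i))
     = (\<Sum>i\<le>d. w i * as d r s i * poly g (th i) * poly f (th i))"
    by (simp add: algebra_simps)
  show ?thesis
    unfolding ip_sym[of f] ip_Ls_expand a b c by simp
qed

lemma Lo_selfadj: "ip (Lo f) g = ip f (Lo g)"
  unfolding ip_def by (intro sum.cong refl) (simp add: poly_Lo algebra_simps)

lemma Lo_x: "degree f < d \<Longrightarrow> Lo f = [:0, 1:] * f"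
proof (rule uniq)
  assume "degree f < d"
  show "degree (Lo f) \<le> d" by (rule deg_Lo)
  show "degree ([:0, 1:] * f) \<le> d"
    using \<open>degree f < d\<close> degree_mult_le[of "[:0,1:]" f] by simp
  show "\<forall>i\<le>d. poly (Lo f) (th i) = poly ([:0, 1:] * f) (th i)" by (simp add: poly_Lo)
qed

end

context LP begin

definition pe :: "nat \<Rightarrow> real poly" where
  "pe n = (SOME p. degree p = n \<and> coeff p n = 1 \<and> Ls p = smult (real n) p)"

lemma pe: "n \<le> d \<Longrightarrow> degree (pe n) = n \<and> coeff (pe n) n = 1 \<and> Ls (pe n) = smult (real n) (pe n)"
  unfolding pe_def by (rule someI_ex) (rule eigen)

lemma pe_ne: "n \<le> d \<Longrightarrow> pe n \<noteq> 0"
  using pe[of n] by auto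

lemma pe_pos: "n \<le> d \<Longrightarrow> ip (pe n) (pe n) > 0"
  using pe[of n] pe_ne[of n] by (intro ip_pos) auto

lemma pe_orth: assumes "n \<le> d" "m \<le> d" "n \<noteq> m" shows "ip (pe n) (pe m) = 0"
proof -
  have "real n * ip (pe n) (pe m) = ip (Ls (pe n)) (pe m)" using pe[OF assms(1)] by (simp add: ip_smult)
  also have "\<dots> = ip (pe n) (Ls (pe m))" by (rule Ls_selfadj)
  also have "\<dots> = real m * ip (pe n) (pe m)" using pe[OF assms(2)] by (simp add: ip_sym[of "pe n"] ip_smult)
  finally show ?thesis using assms(3) by simp
qed

lemma span: "m \<le> d \<Longrightarrow> degree f \<le> m \<Longrightarrow> \<exists>c. f = (\<Sum>i\<le>m. smult (c i) (pe i))"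
proof (induction m arbitrary: f)
  case 0
  have p0: "pe 0 = 1" using pe[of 0] by (auto simp: poly_eq_iff coeff_eq_0)
  have "f = smult (coeff f 0) (pe 0)" unfolding p0 poly_eq_iff
  proof
    fix n show "coeff f n = coeff (smult (coeff f 0) 1) n" using 0 by (cases n) (auto simp: coeff_eq_0)
  qed
  then show ?case by auto
next
  case (Suc m)
  define a where "a = coeff f (Suc m)"
  define h where "h = f - smult a (pe (Suc m))"
  have ps: "degree (pe (Suc m)) = Suc m" "coeff (pe (Suc m)) (Suc m) = 1" using pe[OF Suc.prems(1)] by auto
  have "degree h \<le> Suc m" unfolding h_def using Suc.prems ps by (intro degree_diff_le) auto
  moreover have "coeff h (Suc m) = 0" unfolding h_def a_def using ps by simp
  ultimately have "degree h \<le> m"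
  proof -
    assume h1: "degree h \<le> Suc m" and h2: "coeff h (Suc m) = 0"
    have "\<forall>i>m. coeff h i = 0"
    proof (intro allI impI)
      fix i assume "m < i"
      show "coeff h i = 0"
      proof (cases "i = Suc m")
        case True thus ?thesis using h2 by simp
      next
        case False hence "degree h < i" using \<open>m < i\<close> h1 by simp
        thus ?thesis by (rule coeff_eq_0)
      qed
    qed
    thus ?thesis by (rule degree_le)
  qed
  then obtain c where c: "h = (\<Sum>i\<le>m. smult (c i) (pe i))" using Suc.IH Suc.prems(1) by auto
  define c' where "c' = c(Suc m := a)"
  have "(\<Sum>i\<le>Suc m. smult (c' i) (pe i)) = (\<Sum>i\<le>m. smult (c i) (pe i)) + smult a (pe (Suc m))"
    unfolding c'_def by (simp add: sum.atMost_Suc)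
  also have "\<dots> = f" unfolding c[symmetric] h_def by simp
  finally have "f = (\<Sum>i\<le>Suc m. smult (c' i) (pe i))" by simp
  thus ?case by blast
qed

lemma span_d: "degree f \<le> d \<Longrightarrow> \<exists>c. f = (\<Sum>i<Suc d. smult (c i) (pe i))"
  using span[of d f] by (simp add: lessThan_Suc_atMost)

lemma ip_pe_sum: "k \<le> d \<Longrightarrow> ip (\<Sum>i<Suc d. smult (c i) (pe i)) (pe k) = c k * ip (pe k) (pe k)"
proof -
  assume k: "k \<le> d"
  have "ip (\<Sum>i<Suc d. smult (c i) (pe i)) (pe k) = (\<Sum>i<Suc d. c i * ip (pe i) (pe k))" by (rule ip_sum)
  also have "\<dots> = (\<Sum>i<Suc d. if i = k then c k * ip (pe k) (pe k) else 0)"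
    using k by (intro sum.cong refl) (auto simp: pe_orth less_Suc_eq_le)
  also have "\<dots> = c k * ip (pe k) (pe k)" using k by simp
  finally show ?thesis .
qed

lemma orth_low: assumes n: "n \<le> d" and f: "low n f" shows "ip (pe n) f = 0"
proof (cases n)
  case 0 then show ?thesis using f by (simp add: low_0 ip_sym[of _ 0] ip_zero)
next
  case (Suc m)
  have "degree f \<le> m" using f Suc by (simp add: low_Suc)
  then obtain c where c: "f = (\<Sum>i\<le>m. smult (c i) (pe i))" using span[of m f] n Suc by auto
  have "ip (pe n) f = ip f (pe n)" by (rule ip_sym)
  also have "\<dots> = (\<Sum>i\<le>m. c i * ip (pe i) (pe n))" unfolding c by (rule ip_sum)
  also have "\<dots> = 0" using n Suc by (intro sum.neutral) (auto simp: pe_orth)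
  finally show ?thesis .
qed

end

lemma sum_delta_smult: "(j::nat) < n \<Longrightarrow> (\<Sum>i<n. smult (if i = j then a else 0) (b i)) = smult a (b j)"
proof -
  assume j: "j < n"
  have "(\<Sum>i<n. smult (if i = j then a else 0) (b i)) = (\<Sum>i<n. if i = j then smult a (b j) else 0)"
    by (intro sum.cong refl) auto
  also have "\<dots> = smult a (b j)" using j by simp
  finally show ?thesis .
qed

context LP begin

definition cc :: real where "cc = (r - real d) / 2"

abbreviation Lsp where "Lsp f \<equiv> Ls f + smult cc f"

lemma Pd_space: "lin_space (Pd d)"
  unfolding lin_space_def Pd_def
  by (auto intro: order.trans[OF degree_add_le] order.trans[OF degree_smult_le])

lemma Pd_ne: "Pd d \<noteq> {0}"
proof -
  have "1 \<in> Pd d" by (simp add: Pd_def)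
  thus ?thesis by auto
qed

lemma Lo_lin: "lin_map_on (Pd d) Lo"
  unfolding lin_map_on_def Pd_def by (simp add: deg_Lo Lo_add Lo_smult)

lemma Lsp_lin: "lin_map_on (Pd d) Lsp"
  unfolding lin_map_on_def Pd_def
  by (auto simp: Ls_add Ls_smult smult_add_right algebra_simps
      intro: order.trans[OF degree_add_le] deg_Ls order.trans[OF degree_smult_le])

lemma lag_basis: "ordered_basis (Pd d) (Suc d) lag"
  unfolding ordered_basis_def
proof (intro conjI allI impI ballI)
  fix i assume "i < Suc d" thus "lag i \<in> Pd d" by (simp add: Pd_def degree_lag)
next
  fix c :: "nat \<Rightarrow> real" and k
  assume z: "(\<Sum>i<Suc d. smult (c i) (lag i)) = 0" and k: "k < Suc d"
  have "0 = poly (\<Sum>i<Suc d. smult (c i) (lag i)) (th k)" using z by simp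
  also have "\<dots> = (\<Sum>i<Suc d. if i = k then c i else 0)"
    unfolding poly_sum using k by (intro sum.cong refl) (auto simp: poly_lag)
  also have "\<dots> = c k" using k by simp
  finally show "c k = 0" by simp
next
  fix v assume "v \<in> Pd d"
  hence "v = interp (\<lambda>i. poly v (th i))"
    by (intro uniq) (auto simp: Pd_def degree_interp poly_interp)
  thus "\<exists>c. v = (\<Sum>i<Suc d. smult (c i) (lag i))"
    unfolding interp_def lessThan_Suc_atMost by (auto intro!: exI[of _ "\<lambda>j. poly v (th j)"])
qed

definition Mlag :: "nat \<Rightarrow> nat \<Rightarrow> real" where
  "Mlag i j = (if i = j then th j else 0)"

definition Mtri :: "nat \<Rightarrow> nat \<Rightarrow> real" where
  "Mtri i j = (if i = j then as d r s j + cc else if i + 1 = j then bs d r s i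
      else if j + 1 = i then cs d r s i else 0)"

lemma sum_lag_poly: "k \<le> d \<Longrightarrow> poly (\<Sum>i<Suc d. smult (M i) (lag i)) (th k) = M k"
proof -
  assume k: "k \<le> d"
  have "poly (\<Sum>i<Suc d. smult (M i) (lag i)) (th k) = (\<Sum>i<Suc d. if i = k then M i else 0)"
    unfolding poly_sum using k by (intro sum.cong refl) (auto simp: poly_lag)
  also have "\<dots> = M k" using k by simp
  finally show ?thesis .
qed

lemma deg_sum_lag: "degree (\<Sum>i<Suc d. smult (M i) (lag i)) \<le> d"
  by (rule degree_sum_le) (auto intro: order.trans[OF degree_smult_le] degree_lag)

lemma Lo_lag: "matrix_in_basis (Suc d) lag Lo Mlag"
  unfolding matrix_in_basis_def
proof (intro allI impI)
  fix j assume j: "j < Suc d"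
  show "Lo (lag j) = (\<Sum>i<Suc d. smult (Mlag i j) (lag i))"
  proof (rule uniq)
    show "degree (Lo (lag j)) \<le> d" by (rule deg_Lo)
    show "degree (\<Sum>i<Suc d. smult (Mlag i j) (lag i)) \<le> d" by (rule deg_sum_lag)
    show "\<forall>k\<le>d. poly (Lo (lag j)) (th k) = poly (\<Sum>i<Suc d. smult (Mlag i j) (lag i)) (th k)"
    proof (intro allI impI)
      fix k assume k: "k \<le> d"
      have "poly (Lo (lag j)) (th k) = Mlag k j"
        using k j by (simp add: poly_Lo poly_lag Mlag_def)
      thus "poly (Lo (lag j)) (th k) = poly (\<Sum>i<Suc d. smult (Mlag i j) (lag i)) (th k)"
        unfolding sum_lag_poly[OF k] .
    qed
  qed
qed

lemma Lsp_lag: "matrix_in_basis (Suc d) lag Lsp Mtri"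
  unfolding matrix_in_basis_def
proof (intro allI impI)
  fix j assume j: "j < Suc d"
  show "Lsp (lag j) = (\<Sum>i<Suc d. smult (Mtri i j) (lag i))"
  proof (rule uniq)
    have "degree (smult cc (lag j)) \<le> d" using j degree_lag[of j] by simp
    thus "degree (Lsp (lag j)) \<le> d" by (intro degree_add_le deg_Ls)
    show "degree (\<Sum>i<Suc d. smult (Mtri i j) (lag i)) \<le> d" by (rule deg_sum_lag)
    show "\<forall>k\<le>d. poly (Lsp (lag j)) (th k) = poly (\<Sum>i<Suc d. smult (Mtri i j) (lag i)) (th k)"
    proof (intro allI impI)
      fix k assume k: "k \<le> d"
      have "poly (Lsp (lag j)) (th k) = Rs (lag j) k + cc * poly (lag j) (th k)"
        using k by (simp add: poly_Ls)
      also have "\<dots> = Mtri k j"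
        unfolding Rs_def Mtri_def using j k by (auto simp: poly_lag)
      finally show "poly (Lsp (lag j)) (th k) = poly (\<Sum>i<Suc d. smult (Mtri i j) (lag i)) (th k)"
        unfolding sum_lag_poly[OF k] .
    qed
  qed
qed

lemma Mlag_diag: "is_diagonal (Suc d) Mlag"
  unfolding is_diagonal_def Mlag_def by simp

lemma Mtri_irred: "irred_tridiagonal (Suc d) Mtri"
  unfolding irred_tridiagonal_def
proof (intro conjI allI impI)
  fix i j assume "i < Suc d" "j < Suc d" "j + 1 < i \<or> i + 1 < j"
  thus "Mtri i j = 0" unfolding Mtri_def by auto
next
  fix i assume i: "i + 1 < Suc d"
  have "cs d r s (i + 1) < 0" using i by (intro cs_neg) auto
  thus "Mtri (i + 1) i \<noteq> 0" unfolding Mtri_def by simp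
  have "bs d r s i < 0" using i by (intro bs_neg) auto
  thus "Mtri i (i + 1) \<noteq> 0" unfolding Mtri_def by simp
qed

lemma Mtri_zero: "i + 1 < Suc d \<Longrightarrow> Mtri i i = 0"
  unfolding Mtri_def cc_def using as_eq[of i] by (simp add: field_simps)

end

context LP begin

lemma pe_basis: "ordered_basis (Pd d) (Suc d) pe"
  unfolding ordered_basis_def
proof (intro conjI allI impI ballI)
  fix i assume "i < Suc d" thus "pe i \<in> Pd d" using pe[of i] by (simp add: Pd_def)
next
  fix c :: "nat \<Rightarrow> real" and k
  assume z: "(\<Sum>i<Suc d. smult (c i) (pe i)) = 0" and k: "k < Suc d"
  have "0 = ip (\<Sum>i<Suc d. smult (c i) (pe i)) (pe k)" unfolding z by (simp add: ip_zero)
  also have "\<dots> = c k * ip (pe k) (pe k)" using k by (intro ip_pe_sum) simp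
  finally show "c k = 0" using pe_pos[of k] k by simp
next
  fix v assume "v \<in> Pd d"
  thus "\<exists>c. v = (\<Sum>i<Suc d. smult (c i) (pe i))" by (intro span_d) (simp add: Pd_def)
qed

definition Mpe :: "nat \<Rightarrow> nat \<Rightarrow> real" where
  "Mpe i j = ip (Lo (pe j)) (pe i) / ip (pe i) (pe i)"

definition Md :: "nat \<Rightarrow> nat \<Rightarrow> real" where
  "Md i j = (if i = j then real j + cc else 0)"

lemma Lo_pe: "matrix_in_basis (Suc d) pe Lo Mpe"
  unfolding matrix_in_basis_def
proof (intro allI impI)
  fix j assume j: "j < Suc d"
  obtain c where c: "Lo (pe j) = (\<Sum>i<Suc d. smult (c i) (pe i))" using span_d[OF deg_Lo] by blast
  have "(\<Sum>i<Suc d. smult (c i) (pe i)) = (\<Sum>i<Suc d. smult (Mpe i j) (pe i))"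
  proof (intro sum.cong refl)
    fix i assume i: "i \<in> {..<Suc d}"
    have "ip (Lo (pe j)) (pe i) = c i * ip (pe i) (pe i)" unfolding c using i by (intro ip_pe_sum) simp
    hence "Mpe i j = c i" unfolding Mpe_def using pe_pos[of i] i by simp
    thus "smult (c i) (pe i) = smult (Mpe i j) (pe i)" by simp
  qed
  thus "Lo (pe j) = (\<Sum>i<Suc d. smult (Mpe i j) (pe i))" using c by simp
qed

lemma Lsp_pe: "matrix_in_basis (Suc d) pe Lsp Md"
  unfolding matrix_in_basis_def
proof (intro allI impI)
  fix j assume j: "j < Suc d"
  have "Lsp (pe j) = smult (real j + cc) (pe j)" using pe[of j] j by (simp add: smult_add_left)
  also have "\<dots> = (\<Sum>i<Suc d. smult (Md i j) (pe i))" unfolding Md_def using j by (simp add: sum_delta_smult)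
  finally show "Lsp (pe j) = (\<Sum>i<Suc d. smult (Md i j) (pe i))" .
qed

lemma Md_diag: "is_diagonal (Suc d) Md" unfolding is_diagonal_def Md_def by simp

lemma xp_low: "low (Suc (Suc i)) ([:0, 1:] * pe i)" if "i \<le> d"
  using pe[OF that] degree_mult_le[of "[:0,1:]" "pe i"] by (simp add: low_Suc)

lemma Lo_pe_x: "i < d \<Longrightarrow> Lo (pe i) = [:0, 1:] * pe i"
  using pe[of i] by (intro Lo_x) simp

lemma ip_add_right: "ip f (g + h) = ip f g + ip f h"
  using ip_add[of g h f] by (simp add: ip_sym)

lemma key_nz: assumes i: "i < d" shows "ip (pe (Suc i)) ([:0, 1:] * pe i) \<noteq> 0"
proof -
  define h where "h = [:0, 1:] * pe i - pe (Suc i)"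
  have ps: "degree (pe (Suc i)) = Suc i" "coeff (pe (Suc i)) (Suc i) = 1" using pe[of "Suc i"] i by auto
  have pi: "coeff (pe i) i = 1" using pe[of i] i by auto
  have "low (Suc (Suc i)) h" unfolding h_def using xp_low[of i] i ps
    by (intro low_diff) (auto simp: low_Suc)
  moreover have "coeff h (Suc i) = 0" unfolding h_def using ps pi by simp
  ultimately have hl: "low (Suc i) h" by (rule low_SucD)
  have "ip (pe (Suc i)) ([:0, 1:] * pe i) = ip (pe (Suc i)) (pe (Suc i) + h)" by (simp add: h_def)
  also have "\<dots> = ip (pe (Suc i)) (pe (Suc i))" unfolding ip_add_right
    using orth_low[OF _ hl] i by simp
  finally show ?thesis using pe_pos[of "Suc i"] i by simp
qed

lemma Mpe_irred: "irred_tridiagonal (Suc d) Mpe"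
  unfolding irred_tridiagonal_def
proof (intro conjI allI impI)
  fix i j assume i: "i < Suc d" and j: "j < Suc d" and ij: "j + 1 < i \<or> i + 1 < j"
  show "Mpe i j = 0"
  proof (cases "j + 1 < i")
    case True
    have "ip (Lo (pe j)) (pe i) = ip (pe i) ([:0, 1:] * pe j)"
      using True i by (simp add: Lo_pe_x ip_sym)
    also have "\<dots> = 0" using True i xp_low[of j]
      by (intro orth_low) (auto intro: low_mono)
    finally show ?thesis by (simp add: Mpe_def)
  next
    case False
    hence ij': "i + 1 < j" using ij by simp
    have "ip (Lo (pe j)) (pe i) = ip (pe j) ([:0, 1:] * pe i)"
      using ij' j by (simp add: Lo_selfadj Lo_pe_x)
    also have "\<dots> = 0" using ij' j xp_low[of i]
      by (intro orth_low) (auto intro: low_mono)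
    finally show ?thesis by (simp add: Mpe_def)
  qed
next
  fix i assume i: "i + 1 < Suc d"
  hence i': "i < d" by simp
  have "ip (Lo (pe i)) (pe (i + 1)) = ip (pe (Suc i)) ([:0, 1:] * pe i)"
    using i' by (simp add: Lo_pe_x ip_sym)
  hence "ip (Lo (pe i)) (pe (i + 1)) \<noteq> 0" using key_nz[OF i'] by simp
  thus "Mpe (i + 1) i \<noteq> 0" unfolding Mpe_def using pe_pos[of "i+1"] i' by simp
  have "ip (Lo (pe (i + 1))) (pe i) = ip (pe (Suc i)) ([:0, 1:] * pe i)"
    using i' by (simp add: Lo_selfadj Lo_pe_x)
  hence "ip (Lo (pe (i + 1))) (pe i) \<noteq> 0" using key_nz[OF i'] by simp
  thus "Mpe i (i + 1) \<noteq> 0" unfolding Mpe_def using pe_pos[of i] i' by simp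
qed

lemma main: "leonard_pair (Pd d) (opL d r s) (\<lambda>f. opLs d r s f + smult ((r - real d) / 2) f)
       \<and> dual_almost_bipartite (Pd d) (opL d r s) (\<lambda>f. opLs d r s f + smult ((r - real d) / 2) f)"
proof -
  have e: "(\<lambda>f. opLs d r s f + smult ((r - real d) / 2) f) = (\<lambda>f. Lsp f)" by (simp add: cc_def)
  note facts = Pd_space Pd_ne Lo_lin Lsp_lin lag_basis Lo_lag Lsp_lag Mlag_diag Mtri_irred
    pe_basis Lo_pe Lsp_pe Md_diag Mpe_irred
  have z: "\<forall>i. i + 1 < Suc d \<longrightarrow> Mtri i i = 0" using Mtri_zero by blast
  show ?thesis unfolding e dual_almost_bipartite_def almost_bipartite_def leonard_pair_def
    using facts z by blast
qed

end

theorem corollary4p1: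
  fixes d :: nat and r s :: real
  assumes "r > -1" and "s > -1" and "r \<noteq> 0" and "r + s = 0"
  shows "leonard_pair (Pd d) (opL d r s) (\<lambda>f. opLs d r s f + smult ((r - real d) / 2) f)
       \<and> dual_almost_bipartite (Pd d) (opL d r s) (\<lambda>f. opLs d r s f + smult ((r - real d) / 2) f)"
proof -
  interpret LP d r s using assms by unfold_locales auto
  show ?thesis by (rule main)
qed

end
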